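(* Let $k$ be a field, let $\mathrm{\underline{Rep}}(\mathbb{G})$ be the Delannoy category over $k$, and let $X$ be a $\mathbb{G}$-set. Identify $\Gamma(\mathcal{C}(X)\otimes\mathcal{C}(X))=\Gamma(\mathcal{C}(X\times X))$ with the algebra of $\mathbb{G}$-invariant $k$-valued functions on $X\times X$ under pointwise multiplication. Then an element $\gamma$ of this algebra is an E-idempotent of $\mathcal{C}(X)$ if and only if it is the indicator function of a $\mathbb{G}$-stable equivalence relation $R\subset X\times X$; thus E-idempotents of $\mathcal{C}(X)$ correspond bijectively to $\mathbb{G}$-stable equivalence relations on $X$.
   Context: $\mathbb{G}=\mathrm{Aut}(\mathbf{R},<)$, topologized so that pointwise stabilizers of finite subsets form a neighborhood basis of $1$; a $\mathbb{G}$-set is a set with an action having open stabilizers and finitely many orbits. The Delannoy category is the Karoubi envelope of Harman–Snowden's $\mathrm{\underline{Perm}}(\mathbb{G},\mu)$ for the measure $\mu$ with $\mu(\mathbf{R}^{(n)})=(-1)^n$; its objects $\mathcal{C}(X)$ (Schwartz spaces) are étale commutative algebras, $\mathcal{C}(X)\otimes\mathcal{C}(Y)=\mathcal{C}(X\times Y)$, and $\Gamma(\mathcal{C}(X))=\mathrm{Hom}(\mathbf{1},\mathcal{C}(X))$ is the algebra of $\mathbb{G}$-invariant functions on $X$ under pointwise multiplication. For an étale algebra $B$, an E-idempotent is an idempotent $\gamma\in\Gamma(B\otimes B)$ such that (a) $m(\gamma)=1$ where $m:B\otimes B\to B$ is multiplication; (b) $\tau(\gamma)=\gamma$ where $\tau$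 is the symmetry of $B\otimes B$; (c) writing $\gamma_{i,j}\in\Gamma(B^{\otimes3})$ for $\gamma$ placed in factors $i,j$ and $1$ in the remaining factor, $\gamma_{1,2}\gamma_{2,3}=\gamma_{1,2}\gamma_{1,3}=\gamma_{1,3}\gamma_{2,3}$. *)

theory Defs
  imports Complex_Main
begin

text \<open>The group G = Aut(R,<): order-preserving bijections of the reals.\<close>
definition AutR :: "(real \<Rightarrow> real) set" where
  "AutR = {g. bij g \<and> strict_mono g}"

text \<open>A G-set: an action of AutR on the type 'x with open stabilizers
  (every point is fixed by the pointwise stabilizer of some finite subset of R)
  and finitely many orbits.\<close>
definition is_G_set :: "((real \<Rightarrow> real) \<Rightarrow> 'x \<Rightarrow> 'x) \<Rightarrow> bool" where
  "is_G_set act \<longleftrightarrow>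
     (\<forall>x. act id x = x) \<and>
     (\<forall>g\<in>AutR. \<forall>h\<in>AutR. \<forall>x. act (g \<circ> h) x = act g (act h x)) \<and>
     (\<forall>x. \<exists>A. finite A \<and> (\<forall>g\<in>AutR. (\<forall>a\<in>A. g a = a) \<longrightarrow> act g x = x)) \<and>
     finite {{act g x | g. g \<in> AutR} | x. True}"

text \<open>G-invariant k-valued functions on X x X, i.e. Gamma(C(X) (x) C(X)) = Gamma(C(X x X)).\<close>
definition invariant2 :: "((real \<Rightarrow> real) \<Rightarrow> 'x \<Rightarrow> 'x) \<Rightarrow> ('x \<times> 'x \<Rightarrow> 'k) \<Rightarrow> bool" where
  "invariant2 act \<gamma> \<longleftrightarrow> (\<forall>g\<in>AutR. \<forall>x y. \<gamma> (act g x, act g y) = \<gamma> (x, y))"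

text \<open>Under the identification Gamma(C(Y)) = invariant functions on Y (pointwise product):
  multiplication m : C(X)(x)C(X) -> C(X) is restriction to the diagonal, the symmetry tau
  swaps the coordinates, and gamma_{i,j} is gamma pulled back along the projection
  X^3 -> X^2 onto factors i,j.\<close>
definition mult_map :: "('x \<times> 'x \<Rightarrow> 'k) \<Rightarrow> ('x \<Rightarrow> 'k)" where
  "mult_map \<gamma> = (\<lambda>x. \<gamma> (x, x))"

definition swap_map :: "('x \<times> 'x \<Rightarrow> 'k) \<Rightarrow> ('x \<times> 'x \<Rightarrow> 'k)" where
  "swap_map \<gamma> = (\<lambda>(x, y). \<gamma> (y, x))"

definition gamma12 :: "('x \<times> 'x \<Rightarrow> 'k) \<Rightarrow> ('x \<times> 'x \<times> 'x \<Rightarrow> 'k)" where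
  "gamma12 \<gamma> = (\<lambda>(x, y, z). \<gamma> (x, y))"
definition gamma13 :: "('x \<times> 'x \<Rightarrow> 'k) \<Rightarrow> ('x \<times> 'x \<times> 'x \<Rightarrow> 'k)" where
  "gamma13 \<gamma> = (\<lambda>(x, y, z). \<gamma> (x, z))"
definition gamma23 :: "('x \<times> 'x \<Rightarrow> 'k) \<Rightarrow> ('x \<times> 'x \<times> 'x \<Rightarrow> 'k)" where
  "gamma23 \<gamma> = (\<lambda>(x, y, z). \<gamma> (y, z))"

definition E_idempotent :: "((real \<Rightarrow> real) \<Rightarrow> 'x \<Rightarrow> 'x) \<Rightarrow> ('x \<times> 'x \<Rightarrow> 'k::field) \<Rightarrow> bool" where
  "E_idempotent act \<gamma> \<longleftrightarrow>
     invariant2 act \<gamma> \<and>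
     (\<lambda>p. \<gamma> p * \<gamma> p) = \<gamma> \<and>
     mult_map \<gamma> = (\<lambda>_. 1) \<and>
     swap_map \<gamma> = \<gamma> \<and>
     (\<lambda>t. gamma12 \<gamma> t * gamma23 \<gamma> t) = (\<lambda>t. gamma12 \<gamma> t * gamma13 \<gamma> t) \<and>
     (\<lambda>t. gamma12 \<gamma> t * gamma13 \<gamma> t) = (\<lambda>t. gamma13 \<gamma> t * gamma23 \<gamma> t)"

definition G_stable_rel :: "((real \<Rightarrow> real) \<Rightarrow> 'x \<Rightarrow> 'x) \<Rightarrow> ('x \<times> 'x) set \<Rightarrow> bool" where
  "G_stable_rel act R \<longleftrightarrow> (\<forall>g\<in>AutR. \<forall>x y. (x, y) \<in> R \<longrightarrow> (act g x, act g y) \<in> R)"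

definition rel_indicator :: "('x \<times> 'x) set \<Rightarrow> ('x \<times> 'x \<Rightarrow> 'k::field)" where
  "rel_indicator R = (\<lambda>p. if p \<in> R then 1 else 0)"

end

theory Submission
  imports Defs
begin

lemma inv_AutR:
  assumes "g \<in> AutR"
  shows "inv g \<in> AutR" "inv g \<circ> g = id"
proof -
  have b: "bij g" and s: "strict_mono g" using assms by (auto simp: AutR_def)
  have "strict_mono (inv g)"
  proof (rule strict_monoI)
    fix x y :: real assume "x < y"
    show "inv g x < inv g y"
    proof (rule ccontr)
      assume "\<not> inv g x < inv g y"
      hence "inv g y \<le> inv g x" by simp
      hence "g (inv g y) \<le> g (inv g x)" using s by (simp add: strict_mono_less_eq)
      hence "y \<le> x" using b by (simp add: bij_is_surj surj_f_inv_f)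
      thus False using \<open>x < y\<close> by simp
    qed
  qed
  thus "inv g \<in> AutR" using b by (simp add: AutR_def bij_imp_bij_inv)
  show "inv g \<circ> g = id" using b by (simp add: bij_is_inj)
qed

lemma indicator_inv:
  assumes G: "is_G_set act" and R: "G_stable_rel act R"
  shows "invariant2 act (rel_indicator R :: 'x \<times> 'x \<Rightarrow> 'k::field)"
  unfolding invariant2_def
proof (intro ballI allI)
  fix g x y assume g: "g \<in> AutR"
  have "(act g x, act g y) \<in> R \<longleftrightarrow> (x, y) \<in> R"
  proof
    assume "(x, y) \<in> R" thus "(act g x, act g y) \<in> R" using R g by (simp add: G_stable_rel_def)
  next
    assume h: "(act g x, act g y) \<in> R"
    have gi: "inv g \<in> AutR" "inv g \<circ> g = id" using inv_AutR[OF g] by auto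
    have e: "act (inv g) (act g z) = z" for z
      using G gi g unfolding is_G_set_def by (metis)
    from R gi(1) h have "(act (inv g) (act g x), act (inv g) (act g y)) \<in> R"
      by (simp add: G_stable_rel_def)
    thus "(x, y) \<in> R" by (simp add: e)
  qed
  thus "(rel_indicator R :: 'x \<times> 'x \<Rightarrow> 'k) (act g x, act g y) = rel_indicator R (x, y)"
    by (simp add: rel_indicator_def)
qed

lemma indicator_E:
  assumes G: "is_G_set act" and R: "G_stable_rel act R" and E: "equiv UNIV R"
  shows "E_idempotent act (rel_indicator R :: 'x \<times> 'x \<Rightarrow> 'k::field)"
proof -
  have refl: "(x, x) \<in> R" for x using E by (auto simp: equiv_def refl_on_def)
  have sym: "(x, y) \<in> R \<Longrightarrow> (y, x) \<in> R" for x y using E by (auto simp: equiv_def sym_def)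
  have tr: "(x, y) \<in> R \<Longrightarrow> (y, z) \<in> R \<Longrightarrow> (x, z) \<in> R" for x y z
    using E by (auto simp: equiv_def trans_def)
  have s: "swap_map (rel_indicator R :: 'x \<times> 'x \<Rightarrow> 'k) = rel_indicator R"
    by (auto simp: swap_map_def rel_indicator_def fun_eq_iff dest: sym)
  show ?thesis unfolding E_idempotent_def
    using indicator_inv[OF G R] s
    by (auto simp: rel_indicator_def fun_eq_iff mult_map_def gamma12_def gamma13_def gamma23_def refl
        dest: sym tr)
qed

lemma E_rel:
  assumes E: "E_idempotent act (\<gamma> :: 'x \<times> 'x \<Rightarrow> 'k::field)"
  shows "equiv UNIV {p. \<gamma> p = 1} \<and> G_stable_rel act {p. \<gamma> p = 1} \<and> \<gamma> = rel_indicator {p. \<gamma> p = 1}"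
proof -
  have inv: "invariant2 act \<gamma>" and idem: "\<And>p. \<gamma> p * \<gamma> p = \<gamma> p"
    and m: "\<And>x. \<gamma> (x, x) = 1" and sw: "\<And>x y. \<gamma> (y, x) = \<gamma> (x, y)"
    and c: "\<And>x y z. \<gamma> (x, y) * \<gamma> (y, z) = \<gamma> (x, y) * \<gamma> (x, z)"
    using E unfolding E_idempotent_def mult_map_def swap_map_def gamma12_def gamma13_def gamma23_def
    by (auto simp: fun_eq_iff) (metis case_prod_conv)+
  have v: "\<gamma> p = 0 \<or> \<gamma> p = 1" for p
  proof -
    have "\<gamma> p * (\<gamma> p - 1) = 0" using idem[of p] by (simp add: algebra_simps)
    thus ?thesis by simp
  qed
  have eq: "equiv UNIV {p. \<gamma> p = 1}"
    unfolding equiv_def refl_on_def sym_def trans_def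
    using m sw c by (auto) (metis c mult_1_left)
  have gs: "G_stable_rel act {p. \<gamma> p = 1}" using inv by (simp add: G_stable_rel_def invariant2_def)
  have "\<gamma> = rel_indicator {p. \<gamma> p = 1}"
    using v by (auto simp: rel_indicator_def fun_eq_iff)
  thus ?thesis using eq gs by blast
qed

theorem proposition3p2:
  fixes act :: "(real \<Rightarrow> real) \<Rightarrow> 'x \<Rightarrow> 'x"
  assumes "is_G_set act"
  shows "(\<forall>\<gamma> :: 'x \<times> 'x \<Rightarrow> 'k::field. invariant2 act \<gamma> \<longrightarrow>
            (E_idempotent act \<gamma> \<longleftrightarrow>
             (\<exists>R. equiv UNIV R \<and> G_stable_rel act R \<and> \<gamma> = rel_indicator R)))
       \<and> bij_betw (rel_indicator :: ('x \<times> 'x) set \<Rightarrow> ('x \<times> 'x \<Rightarrow> 'k))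
           {R. equiv UNIV R \<and> G_stable_rel act R}
           {\<gamma>. E_idempotent act \<gamma>}"
proof (intro conjI allI impI)
  fix \<gamma> :: "'x \<times> 'x \<Rightarrow> 'k"
  show "E_idempotent act \<gamma> \<longleftrightarrow> (\<exists>R. equiv UNIV R \<and> G_stable_rel act R \<and> \<gamma> = rel_indicator R)"
    using E_rel[of act \<gamma>] indicator_E[OF assms] by blast
next
  have inj: "inj (rel_indicator :: ('x \<times> 'x) set \<Rightarrow> ('x \<times> 'x \<Rightarrow> 'k))"
  proof (rule injI)
    fix R S :: "('x \<times> 'x) set"
    assume h: "(rel_indicator R :: 'x \<times> 'x \<Rightarrow> 'k) = rel_indicator S"
    show "R = S"
    proof (rule set_eqI)
      fix p show "p \<in> R \<longleftrightarrow> p \<in> S"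
        using fun_cong[OF h, of p] by (auto simp: rel_indicator_def split: if_splits)
    qed
  qed
  show "bij_betw (rel_indicator :: ('x \<times> 'x) set \<Rightarrow> ('x \<times> 'x \<Rightarrow> 'k))
           {R. equiv UNIV R \<and> G_stable_rel act R} {\<gamma>. E_idempotent act \<gamma>}"
    unfolding bij_betw_def
  proof
    show "inj_on (rel_indicator :: ('x \<times> 'x) set \<Rightarrow> ('x \<times> 'x \<Rightarrow> 'k)) {R. equiv UNIV R \<and> G_stable_rel act R}"
      using inj by (simp add: inj_on_def inj_def)
    show "(rel_indicator :: ('x \<times> 'x) set \<Rightarrow> ('x \<times> 'x \<Rightarrow> 'k)) ` {R. equiv UNIV R \<and> G_stable_rel act R}
          = {\<gamma>. E_idempotent act \<gamma>}"
    proof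
      show "(rel_indicator :: ('x \<times> 'x) set \<Rightarrow> ('x \<times> 'x \<Rightarrow> 'k)) ` {R. equiv UNIV R \<and> G_stable_rel act R}
          \<subseteq> {\<gamma>. E_idempotent act \<gamma>}" using indicator_E[OF assms] by blast
      show "{\<gamma>. E_idempotent act \<gamma>} \<subseteq> (rel_indicator :: ('x \<times> 'x) set \<Rightarrow> ('x \<times> 'x \<Rightarrow> 'k)) ` {R. equiv UNIV R \<and> G_stable_rel act R}"
      proof
        fix \<gamma> :: "'x \<times> 'x \<Rightarrow> 'k" assume "\<gamma> \<in> {\<gamma>. E_idempotent act \<gamma>}"
        hence "E_idempotent act \<gamma>" by simp
        from E_rel[OF this] show "\<gamma> \<in> rel_indicator ` {R. equiv UNIV R \<and> G_stable_rel act R}" by blast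
      qed
    qed
  qed
qed

end
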